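(* Let $(\Omega,\mathcal A)$ be a measurable space, let $U$ be an open set in $\mathbb C$, let $f:\Omega\times U\to\mathbb C$ be a random holomorphic function on $U$, and let $K$ be a compact subset of $U$. Then there exists a sequence $R_1,R_2,\ldots$ of random rational functions with poles off $K$ such that, for each $\omega\in\Omega$, $R_n(\omega,\cdot)\to f(\omega,\cdot)$ uniformly on $K$.
   Context: A random holomorphic function on an open set $U$ is a function $f:\Omega\times U\to\mathbb C$ such that $f(\omega,\cdot)$ is holomorphic on $U$ for every $\omega\in\Omega$ and $f(\cdot,z)$ is measurable (Borel sets on $\mathbb C$) for every $z\in U$. A random rational function with poles off $K$ is a function $R(\omega,z)$ such that $R(\omega,\cdot)$ is a rational function with no poles on $K$ for each $\omega$ and $R(\cdot,z)$ is measurable for each $z$. *)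

theory Defs
  imports "HOL-Analysis.Analysis" "HOL-Computational_Algebra.Polynomial"
begin

definition random_holomorphic :: "'a measure \<Rightarrow> complex set \<Rightarrow> ('a \<Rightarrow> complex \<Rightarrow> complex) \<Rightarrow> bool" where
  "random_holomorphic M U f \<longleftrightarrow>
     (\<forall>\<omega>\<in>space M. f \<omega> holomorphic_on U) \<and> (\<forall>z\<in>U. (\<lambda>\<omega>. f \<omega> z) \<in> borel_measurable M)"

text \<open>A rational function p/q (q a nonzero polynomial) with no poles on K; the representation
  is taken with q nonvanishing on K. At zeros of q the value follows HOL's convention x/0 = 0.\<close>
definition rational_no_poles_on :: "complex set \<Rightarrow> (complex \<Rightarrow> complex) \<Rightarrow> bool" where
  "rational_no_poles_on K g \<longleftrightarrow>
     (\<exists>p q :: complex poly. q \<noteq> 0 \<and> (\<forall>z\<in>K. poly q z \<noteq> 0) \<and> (\<forall>z. g z = poly p z / poly q z))"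

definition random_rational_no_poles_on :: "'a measure \<Rightarrow> complex set \<Rightarrow> ('a \<Rightarrow> complex \<Rightarrow> complex) \<Rightarrow> bool" where
  "random_rational_no_poles_on M K R \<longleftrightarrow>
     (\<forall>\<omega>\<in>space M. rational_no_poles_on K (R \<omega>)) \<and> (\<forall>z. (\<lambda>\<omega>. R \<omega> z) \<in> borel_measurable M)"

end

theory Submission
  imports Defs "HOL-Complex_Analysis.Complex_Analysis"
begin


lemma riemann_split:
  fixes h :: "real \<Rightarrow> complex"
  assumes "continuous_on {0..1} h" "n > 0" "m \<le> n"
  shows "integral {0..real m / n} h = (\<Sum>k<m. integral {real k / n..real (Suc k) / n} h)"
  using assms(3)
proof (induction m)
  case 0 then show ?case by simp
next
  case (Suc m)
  have le: "real m / n \<le> real (Suc m) / n" "0 \<le> real m / n" "real (Suc m) / n \<le> 1"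
    using Suc.prems assms(2) by (auto simp: divide_simps)
  have int: "h integrable_on {0..real (Suc m) / n}"
    by (rule integrable_continuous_interval, rule continuous_on_subset[OF assms(1)]) (use le in auto)
  have "integral {0..real (Suc m) / n} h = integral {0..real m / n} h + integral {real m / n..real (Suc m) / n} h"
    using Henstock_Kurzweil_Integration.integral_combine[OF le(2) le(1) int] by simp
  then show ?case using Suc by simp
qed

lemma riemann_bound:
  fixes h :: "real \<Rightarrow> complex"
  assumes cont: "continuous_on {0..1} h" and n: "n > 0" and e: "e \<ge> 0"
    and mod: "\<And>s t. s \<in> {0..1} \<Longrightarrow> t \<in> {0..1} \<Longrightarrow> \<bar>s - t\<bar> \<le> 1 / n \<Longrightarrow> norm (h s - h t) \<le> e"
  shows "norm (integral {0..1} h - (\<Sum>k<n. h (real k / n)) / n) \<le> e"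
proof -
  have piece: "norm (integral {real k / n..real (Suc k) / n} h - h (real k / n) / n) \<le> e / n" if k: "k < n" for k
  proof -
    define a where "a = real k / n"
    define b where "b = real (Suc k) / n"
    have ab: "0 \<le> a" "a \<le> b" "b \<le> 1" "b - a = 1 / n"
      using k n by (auto simp: a_def b_def divide_simps)
    have c: "continuous_on {a..b} h" by (rule continuous_on_subset[OF cont]) (use ab in auto)
    have "integral {a..b} (\<lambda>t. h t - h a) = integral {a..b} h - (b - a) *\<^sub>R h a"
      by (subst integral_diff) (use ab in \<open>auto intro!: integrable_continuous_interval c\<close>)
    moreover have "norm (integral {a..b} (\<lambda>t. h t - h a)) \<le> e * (b - a)"
      by (rule integral_bound) (use ab in \<open>auto intro!: continuous_intros c mod\<close>)
    moreover have "(b - a) *\<^sub>R h a = h a / of_nat n"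
      using ab(4) by (simp add: scaleR_conv_of_real field_simps)
    moreover have "e * (b - a) = e / n" using ab(4) by simp
    ultimately have "norm (integral {a..b} h - h a / of_nat n) \<le> e / n" by simp
    then show ?thesis by (simp add: a_def b_def)
  qed
  have "integral {0..1} h = (\<Sum>k<n. integral {real k / n..real (Suc k) / n} h)"
    using riemann_split[OF cont n, of n] n by simp
  then have "integral {0..1} h - (\<Sum>k<n. h (real k / n)) / n
      = (\<Sum>k<n. integral {real k / n..real (Suc k) / n} h - h (real k / n) / n)"
    by (simp add: sum_subtractf sum_divide_distrib)
  also have "norm \<dots> \<le> (\<Sum>k<n. e / n)"
    by (rule sum_norm_le) (use piece in auto)
  also have "\<dots> = e" using n by simp
  finally show ?thesis .
qed

lemma riemann_linepath:
  fixes g :: "complex \<Rightarrow> complex"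
  assumes contg: "continuous_on (closed_segment a b) g" and L: "compact L"
    and disj: "L \<inter> closed_segment a b = {}"
  shows "uniform_limit L
     (\<lambda>n z. (b - a) / of_nat n * (\<Sum>k<n. g (linepath a b (real k / n)) / (linepath a b (real k / n) - z)))
     (\<lambda>z. contour_integral (linepath a b) (\<lambda>w. g w / (w - z))) sequentially"
proof (rule uniform_limitI)
  fix e :: real assume e: "e > 0"
  define \<phi> where "\<phi> = (\<lambda>(t::real, z::complex). g (linepath a b t) / (linepath a b t - z) * (b - a))"
  have seg: "t \<in> {0..1} \<Longrightarrow> linepath a b t \<in> closed_segment a b" for t
    by (metis atLeastAtMost_iff linepath_in_path path_image_linepath)
  have ne: "t \<in> {0..1} \<Longrightarrow> z \<in> L \<Longrightarrow> linepath a b t - z \<noteq> 0" for t z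
    using seg disj by fastforce
  have cphi: "continuous_on ({0..1} \<times> L) \<phi>"
    unfolding \<phi>_def
    apply (rule continuous_on_subset[of "{p. fst p \<in> {0..1} \<and> snd p \<in> L}"])
    apply (simp add: split_def)
    apply (intro continuous_intros continuous_on_compose2[OF contg])
       apply (simp_all add: linepath_def)
       apply (intro continuous_intros)
    using seg ne apply (auto simp: linepath_def)[1]
      apply (intro continuous_intros)
    using seg ne by (auto simp: linepath_def)
  have "uniformly_continuous_on ({0..1} \<times> L) \<phi>"
    by (rule compact_uniformly_continuous[OF cphi]) (simp add: compact_Times L)
  then obtain d where d: "d > 0" and dd: "\<And>x y. x \<in> {0..1} \<times> L \<Longrightarrow> y \<in> {0..1} \<times> L \<Longrightarrow> dist y x < d \<Longrightarrow> dist (\<phi> y) (\<phi> x) < e / 2"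
    unfolding uniformly_continuous_on_def using e by (meson half_gt_zero)
  obtain N :: nat where N: "1 / d < N" using reals_Archimedean2 by blast
  have "\<forall>n\<ge>N. \<forall>z\<in>L. dist ((b - a) / of_nat n * (\<Sum>k<n. g (linepath a b (real k / n)) / (linepath a b (real k / n) - z)))
       (contour_integral (linepath a b) (\<lambda>w. g w / (w - z))) < e"
  proof (intro allI impI ballI)
    fix n z assume n: "N \<le> n" and z: "z \<in> L"
    have Npos: "0 < real N" using N d by (smt (verit) divide_pos_pos zero_less_one)
    have npos: "n > 0" using Npos n by simp
    have "1 / real n \<le> 1 / real N" using Npos n by (simp add: frac_le)
    moreover have "1 / real N < d" using N d Npos by (simp add: field_simps)
    ultimately have nd: "1 / real n < d" by linarith
    have cz: "continuous_on {0..1} (\<lambda>t. \<phi> (t, z))"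
      by (rule continuous_on_compose2[OF cphi]) (use z in \<open>auto intro!: continuous_intros\<close>)
    have ci: "contour_integral (linepath a b) (\<lambda>w. g w / (w - z)) = integral {0..1} (\<lambda>t. \<phi> (t, z))"
      by (simp add: contour_integral_integral \<phi>_def)
    have rs: "(b - a) / of_nat n * (\<Sum>k<n. g (linepath a b (real k / n)) / (linepath a b (real k / n) - z))
        = (\<Sum>k<n. \<phi> (real k / n, z)) / n"
      by (simp add: \<phi>_def sum_distrib_left sum_divide_distrib mult.commute)
    have "norm (integral {0..1} (\<lambda>t. \<phi> (t, z)) - (\<Sum>k<n. \<phi> (real k / n, z)) / n) \<le> e / 2"
    proof (rule riemann_bound[OF cz npos])
      show "0 \<le> e / 2" using e by simp
      fix s t :: real assume st: "s \<in> {0..1}" "t \<in> {0..1}" "\<bar>s - t\<bar> \<le> 1 / n"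
      have "dist (s, z) (t, z) < d" using st nd by (simp add: dist_Pair_Pair dist_real_def)
      then have "dist (\<phi> (s, z)) (\<phi> (t, z)) < e / 2" using dd[of "(t,z)" "(s,z)"] st z by auto
      then show "norm (\<phi> (s, z) - \<phi> (t, z)) \<le> e / 2" by (simp add: dist_norm)
    qed
    then show "dist ((b - a) / of_nat n * (\<Sum>k<n. g (linepath a b (real k / n)) / (linepath a b (real k / n) - z)))
       (contour_integral (linepath a b) (\<lambda>w. g w / (w - z))) < e"
      unfolding rs ci dist_norm using e by (simp add: norm_minus_commute)
  qed
  then show "\<forall>\<^sub>F n in sequentially. \<forall>z\<in>L. dist ((b - a) / of_nat n * (\<Sum>k<n. g (linepath a b (real k / n)) / (linepath a b (real k / n) - z)))
       (contour_integral (linepath a b) (\<lambda>w. g w / (w - z))) < e"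
    unfolding eventually_sequentially by blast
qed

definition ratf :: "'b set \<Rightarrow> ('b \<Rightarrow> complex) \<Rightarrow> ('b \<Rightarrow> complex) \<Rightarrow> (complex \<Rightarrow> complex) \<Rightarrow> complex \<Rightarrow> complex" where
  "ratf J c w g z = (if z \<in> w ` J then 0 else (\<Sum>j\<in>J. c j * g (w j) / (w j - z)))"

lemma ratf_poly_aux:
  fixes J :: "'b set" and c w :: "'b \<Rightarrow> complex"
  assumes "finite J"
  shows "\<exists>p q :: complex poly. q \<noteq> 0 \<and> (\<forall>z. poly q z = 0 \<longleftrightarrow> z \<in> w ` J) \<and>
           (\<forall>z. z \<notin> w ` J \<longrightarrow> poly p z / poly q z = (\<Sum>j\<in>J. c j / (w j - z)))"
  using assms
proof (induction J rule: finite_induct)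
  case empty
  then show ?case by (intro exI[of _ 0] exI[of _ 1]) auto
next
  case (insert j J)
  then obtain p q :: "complex poly" where q: "q \<noteq> 0" and qz: "\<forall>z. poly q z = 0 \<longleftrightarrow> z \<in> w ` J"
    and pq: "\<forall>z. z \<notin> w ` J \<longrightarrow> poly p z / poly q z = (\<Sum>j\<in>J. c j / (w j - z))" by blast
  define q' where "q' = [:w j, -1:] * q"
  define p' where "p' = smult (c j) q + [:w j, -1:] * p"
  have "[:w j, -1:] \<noteq> (0::complex poly)" by simp
  then have "q' \<noteq> 0" using q unfolding q'_def by (metis no_zero_divisors)
  moreover have "\<forall>z. poly q' z = 0 \<longleftrightarrow> z \<in> w ` insert j J"
    using qz by (auto simp: q'_def)
  moreover have "\<forall>z. z \<notin> w ` insert j J \<longrightarrow> poly p' z / poly q' z = (\<Sum>j\<in>insert j J. c j / (w j - z))"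
  proof (intro allI impI)
    fix z assume z: "z \<notin> w ` insert j J"
    then have nz: "poly q z \<noteq> 0" "w j - z \<noteq> 0" using qz by auto
    have "poly p' z / poly q' z = c j / (w j - z) + poly p z / poly q z"
      using nz by (simp add: p'_def q'_def field_simps)
    also have "\<dots> = (\<Sum>j\<in>insert j J. c j / (w j - z))"
      using pq z insert.hyps by simp
    finally show "poly p' z / poly q' z = (\<Sum>j\<in>insert j J. c j / (w j - z))" .
  qed
  ultimately show ?case by blast
qed

lemma ratf_rational:
  assumes "finite J" "w ` J \<inter> K = {}"
  shows "rational_no_poles_on K (ratf J c w g)"
proof -
  obtain p q :: "complex poly" where q: "q \<noteq> 0" and qz: "\<forall>z. poly q z = 0 \<longleftrightarrow> z \<in> w ` J"
    and pq: "\<forall>z. z \<notin> w ` J \<longrightarrow> poly p z / poly q z = (\<Sum>j\<in>J. (c j * g (w j)) / (w j - z))"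
    using ratf_poly_aux[OF assms(1), of w "\<lambda>j. c j * g (w j)"] by blast
  show ?thesis unfolding rational_no_poles_on_def
  proof (intro exI conjI)
    show "q \<noteq> 0" by fact
    show "\<forall>z\<in>K. poly q z \<noteq> 0" using qz assms(2) by auto
    show "\<forall>z. ratf J c w g z = poly p z / poly q z"
      using qz pq by (auto simp: ratf_def)
  qed
qed

lemma ratf_measurable:
  assumes "\<And>j. j \<in> J \<Longrightarrow> (\<lambda>\<omega>. f \<omega> (w j)) \<in> borel_measurable M"
  shows "(\<lambda>\<omega>. ratf J c w (f \<omega>) z) \<in> borel_measurable M"
proof (cases "z \<in> w ` J")
  case True then show ?thesis by (simp add: ratf_def)
next
  case False
  have "(\<lambda>\<omega>. \<Sum>j\<in>J. c j * f \<omega> (w j) / (w j - z)) \<in> borel_measurable M"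
    by (intro borel_measurable_sum borel_measurable_divide borel_measurable_times borel_measurable_const assms)
  then show ?thesis using False by (simp add: ratf_def)
qed

lemma convex_lin_le: "convex {w::complex. \<alpha> * Re w + \<beta> * Im w \<le> \<gamma>}"
  using convex_halfspace_le[of "Complex \<alpha> \<beta>" \<gamma>] by (simp add: inner_complex_def)

lemma convex_lin_eq: "convex {w::complex. \<alpha> * Re w + \<beta> * Im w = \<gamma>}"
  using convex_hyperplane[of "Complex \<alpha> \<beta>" \<gamma>] by (simp add: inner_complex_def)


lemma two_tri:
  assumes cF: "continuous_on (closed_segment a b \<union> closed_segment b c \<union> closed_segment a c \<union> closed_segment d c \<union> closed_segment a d) F"
  shows "contour_integral (linepath a b +++ linepath b c +++ linepath c a) F
       + contour_integral (linepath a c +++ linepath c d +++ linepath d a) F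
       = contour_integral (linepath a b) F + contour_integral (linepath b c) F
         - contour_integral (linepath d c) F - contour_integral (linepath a d) F"
proof -
  have c1: "continuous_on (closed_segment a b) F" "continuous_on (closed_segment b c) F"
    "continuous_on (closed_segment a c) F" "continuous_on (closed_segment d c) F" "continuous_on (closed_segment a d) F"
    by (rule continuous_on_subset[OF cF]; blast)+
  have c2: "continuous_on (closed_segment c a) F" "continuous_on (closed_segment c d) F" "continuous_on (closed_segment d a) F"
    using c1 by (simp_all add: closed_segment_commute)
  note ints = c1[THEN contour_integrable_continuous_linepath] c2[THEN contour_integrable_continuous_linepath]
  have j1: "contour_integral (linepath a b +++ linepath b c +++ linepath c a) F
      = contour_integral (linepath a b) F + contour_integral (linepath b c) F + contour_integral (linepath c a) F"
    using ints by (simp add: contour_integral_join contour_integrable_joinI valid_path_join)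
  have j2: "contour_integral (linepath a c +++ linepath c d +++ linepath d a) F
      = contour_integral (linepath a c) F + contour_integral (linepath c d) F + contour_integral (linepath d a) F"
    using ints by (simp add: contour_integral_join contour_integrable_joinI valid_path_join)
  have r: "contour_integral (linepath c a) F = - contour_integral (linepath a c) F"
     "contour_integral (linepath c d) F = - contour_integral (linepath d c) F"
     "contour_integral (linepath d a) F = - contour_integral (linepath a d) F"
    using c2 contour_integral_reverse_linepath by auto
  show ?thesis using j1 j2 r by simp
qed

lemma sq_geom:
  fixes x0 y0 \<delta> :: real and a b c d :: complex
  assumes \<delta>: "\<delta> > 0"
    and ad: "a = Complex x0 y0" and bd: "b = Complex (x0 + \<delta>) y0"
    and cd: "c = Complex (x0 + \<delta>) (y0 + \<delta>)" and dd: "d = Complex x0 (y0 + \<delta>)"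
  shows "convex hull {a,b,c} \<subseteq> {w. y0 \<le> Im w \<and> Im w - y0 \<le> Re w - x0 \<and> Re w \<le> x0 + \<delta>}"
    and "convex hull {a,c,d} \<subseteq> {w. x0 \<le> Re w \<and> Re w - x0 \<le> Im w - y0 \<and> Im w \<le> y0 + \<delta>}"
    and "{w. y0 < Im w \<and> Im w - y0 < Re w - x0 \<and> Re w < x0 + \<delta>} \<subseteq> interior (convex hull {a,b,c})"
    and "{w. x0 < Re w \<and> Re w - x0 < Im w - y0 \<and> Im w < y0 + \<delta>} \<subseteq> interior (convex hull {a,c,d})"
    and "closed_segment a b \<subseteq> {w. Im w = y0}"
    and "closed_segment b c \<subseteq> {w. Re w = x0 + \<delta>}"
    and "closed_segment a c \<subseteq> {w. Re w - Im w = x0 - y0}"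
    and "closed_segment d c \<subseteq> {w. Im w = y0 + \<delta>}"
    and "closed_segment a d \<subseteq> {w. Re w = x0}"
proof -
  have cv1: "convex {w::complex. y0 \<le> Im w \<and> Im w - y0 \<le> Re w - x0 \<and> Re w \<le> x0 + \<delta>}"
  proof -
    have "{w::complex. y0 \<le> Im w \<and> Im w - y0 \<le> Re w - x0 \<and> Re w \<le> x0 + \<delta>}
       = {w. 0 * Re w + (-1) * Im w \<le> - y0} \<inter> {w. (-1) * Re w + 1 * Im w \<le> y0 - x0} \<inter> {w. 1 * Re w + 0 * Im w \<le> x0 + \<delta>}"
      by auto
    then show ?thesis by (simp only:) (intro convex_Int convex_lin_le)
  qed
  show "convex hull {a,b,c} \<subseteq> {w. y0 \<le> Im w \<and> Im w - y0 \<le> Re w - x0 \<and> Re w \<le> x0 + \<delta>}"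
    by (rule hull_minimal) (use cv1 \<delta> in \<open>auto simp: ad bd cd\<close>)
  have cv2: "convex {w::complex. x0 \<le> Re w \<and> Re w - x0 \<le> Im w - y0 \<and> Im w \<le> y0 + \<delta>}"
  proof -
    have "{w::complex. x0 \<le> Re w \<and> Re w - x0 \<le> Im w - y0 \<and> Im w \<le> y0 + \<delta>}
       = {w. (-1) * Re w + 0 * Im w \<le> - x0} \<inter> {w. 1 * Re w + (-1) * Im w \<le> x0 - y0} \<inter> {w. 0 * Re w + 1 * Im w \<le> y0 + \<delta>}"
      by auto
    then show ?thesis by (simp only:) (intro convex_Int convex_lin_le)
  qed
  show "convex hull {a,c,d} \<subseteq> {w. x0 \<le> Re w \<and> Re w - x0 \<le> Im w - y0 \<and> Im w \<le> y0 + \<delta>}"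
    by (rule hull_minimal) (use cv2 \<delta> in \<open>auto simp: ad cd dd\<close>)
  show "{w. y0 < Im w \<and> Im w - y0 < Re w - x0 \<and> Re w < x0 + \<delta>} \<subseteq> interior (convex hull {a,b,c})"
  proof (rule interior_maximal)
    show "open {w. y0 < Im w \<and> Im w - y0 < Re w - x0 \<and> Re w < x0 + \<delta>}"
      by (intro open_Collect_conj open_Collect_less continuous_intros)
    show "{w. y0 < Im w \<and> Im w - y0 < Re w - x0 \<and> Re w < x0 + \<delta>} \<subseteq> convex hull {a,b,c}"
    proof
      fix w assume w: "w \<in> {w. y0 < Im w \<and> Im w - y0 < Re w - x0 \<and> Re w < x0 + \<delta>}"
      define p where "p = 1 - (Re w - x0) / \<delta>"
      define q where "q = (Re w - x0) / \<delta> - (Im w - y0) / \<delta>"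
      define r where "r = (Im w - y0) / \<delta>"
      have "0 \<le> p" "0 \<le> q" "0 \<le> r" "p + q + r = 1"
        using w \<delta> by (auto simp: p_def q_def r_def divide_simps)
      moreover have "w = p *\<^sub>R a + q *\<^sub>R b + r *\<^sub>R c"
        using \<delta> by (simp add: complex_eq_iff ad bd cd p_def q_def r_def field_simps)
      ultimately show "w \<in> convex hull {a,b,c}" unfolding convex_hull_3 by blast
    qed
  qed
  show "{w. x0 < Re w \<and> Re w - x0 < Im w - y0 \<and> Im w < y0 + \<delta>} \<subseteq> interior (convex hull {a,c,d})"
  proof (rule interior_maximal)
    show "open {w. x0 < Re w \<and> Re w - x0 < Im w - y0 \<and> Im w < y0 + \<delta>}"
      by (intro open_Collect_conj open_Collect_less continuous_intros)
    show "{w. x0 < Re w \<and> Re w - x0 < Im w - y0 \<and> Im w < y0 + \<delta>} \<subseteq> convex hull {a,c,d}"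
    proof
      fix w assume w: "w \<in> {w. x0 < Re w \<and> Re w - x0 < Im w - y0 \<and> Im w < y0 + \<delta>}"
      define p where "p = 1 - (Im w - y0) / \<delta>"
      define q where "q = (Re w - x0) / \<delta>"
      define r where "r = (Im w - y0) / \<delta> - (Re w - x0) / \<delta>"
      have "0 \<le> p" "0 \<le> q" "0 \<le> r" "p + q + r = 1"
        using w \<delta> by (auto simp: p_def q_def r_def divide_simps)
      moreover have "w = p *\<^sub>R a + q *\<^sub>R c + r *\<^sub>R d"
        using \<delta> by (simp add: complex_eq_iff ad dd cd p_def q_def r_def field_simps)
      ultimately show "w \<in> convex hull {a,c,d}" unfolding convex_hull_3 by blast
    qed
  qed
  have l1: "convex {w::complex. Im w = y0}" using convex_lin_eq[of 0 1 y0] by simp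
  have l2: "convex {w::complex. Re w = x0 + \<delta>}" using convex_lin_eq[of 1 0 "x0 + \<delta>"] by simp
  have l3: "convex {w::complex. Re w - Im w = x0 - y0}" using convex_lin_eq[of 1 "-1" "x0 - y0"] by simp
  have l4: "convex {w::complex. Im w = y0 + \<delta>}" using convex_lin_eq[of 0 1 "y0 + \<delta>"] by simp
  have l5: "convex {w::complex. Re w = x0}" using convex_lin_eq[of 1 0 x0] by simp
  show "closed_segment a b \<subseteq> {w. Im w = y0}" by (rule closed_segment_subset[OF _ _ l1]) (auto simp: ad bd)
  show "closed_segment b c \<subseteq> {w. Re w = x0 + \<delta>}" by (rule closed_segment_subset[OF _ _ l2]) (auto simp: cd bd)
  show "closed_segment a c \<subseteq> {w. Re w - Im w = x0 - y0}" by (rule closed_segment_subset[OF _ _ l3]) (auto simp: ad cd)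
  show "closed_segment d c \<subseteq> {w. Im w = y0 + \<delta>}" by (rule closed_segment_subset[OF _ _ l4]) (auto simp: cd dd)
  show "closed_segment a d \<subseteq> {w. Re w = x0}" by (rule closed_segment_subset[OF _ _ l5]) (auto simp: ad dd)
qed

lemma seg_in_hull:
  fixes a b c :: "'a::euclidean_space"
  shows "convex hull {a,b,c} \<supseteq> closed_segment a b" and "convex hull {a,b,c} \<supseteq> closed_segment b c"
  and "convex hull {a,b,c} \<supseteq> closed_segment c a"
  by (rule closed_segment_subset; simp add: hull_inc convex_convex_hull)+

lemma sq_cases:
  fixes x0 y0 \<delta> :: real and a b c d z :: complex and g :: "complex \<Rightarrow> complex"
  assumes \<delta>: "\<delta> > 0"
    and ad: "a = Complex x0 y0" and bd: "b = Complex (x0 + \<delta>) y0"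
    and cd: "c = Complex (x0 + \<delta>) (y0 + \<delta>)" and dd: "d = Complex x0 (y0 + \<delta>)"
    and holo: "g holomorphic_on {w. x0 \<le> Re w \<and> Re w \<le> x0 + \<delta> \<and> y0 \<le> Im w \<and> Im w \<le> y0 + \<delta>}"
  shows "z \<notin> {w. x0 \<le> Re w \<and> Re w \<le> x0 + \<delta> \<and> y0 \<le> Im w \<and> Im w \<le> y0 + \<delta>} \<Longrightarrow>
      contour_integral (linepath a b) (\<lambda>w. g w / (w - z)) + contour_integral (linepath b c) (\<lambda>w. g w / (w - z))
    - contour_integral (linepath d c) (\<lambda>w. g w / (w - z)) - contour_integral (linepath a d) (\<lambda>w. g w / (w - z)) = 0"
  and "x0 < Re z \<Longrightarrow> Re z < x0 + \<delta> \<Longrightarrow> y0 < Im z \<Longrightarrow> Im z < y0 + \<delta> \<Longrightarrow> Re z - x0 \<noteq> Im z - y0 \<Longrightarrow>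
      contour_integral (linepath a b) (\<lambda>w. g w / (w - z)) + contour_integral (linepath b c) (\<lambda>w. g w / (w - z))
    - contour_integral (linepath d c) (\<lambda>w. g w / (w - z)) - contour_integral (linepath a d) (\<lambda>w. g w / (w - z)) = 2 * pi * \<i> * g z"
proof -
  define Q where "Q = {w. x0 \<le> Re w \<and> Re w \<le> x0 + \<delta> \<and> y0 \<le> Im w \<and> Im w \<le> y0 + \<delta>}"
  define F where "F = (\<lambda>w. g w / (w - z))"
  note G = sq_geom[OF \<delta> ad bd cd dd]
  have H1: "convex hull {a,b,c} \<subseteq> Q" using G(1) by (force simp: Q_def)
  have H2: "convex hull {a,c,d} \<subseteq> Q" using G(2) by (force simp: Q_def)
  have S1: "closed_segment a b \<subseteq> Q" "closed_segment b c \<subseteq> Q" "closed_segment a c \<subseteq> Q"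
    using seg_in_hull[where a=a and b=b and c=c] H1 by (auto simp: closed_segment_commute)
  have S2: "closed_segment d c \<subseteq> Q" "closed_segment a d \<subseteq> Q"
    using seg_in_hull[where a=a and b=c and c=d] H2 by (auto simp: closed_segment_commute)
  have contg: "continuous_on Q g" using holo holomorphic_on_imp_continuous_on Q_def by blast
  have key: "contour_integral (linepath a b) F + contour_integral (linepath b c) F
       - contour_integral (linepath d c) F - contour_integral (linepath a d) F
     = contour_integral (linepath a b +++ linepath b c +++ linepath c a) F
       + contour_integral (linepath a c +++ linepath c d +++ linepath d a) F"
    if znot: "z \<notin> closed_segment a b \<union> closed_segment b c \<union> closed_segment a c \<union> closed_segment d c \<union> closed_segment a d"
  proof -
    have "continuous_on (closed_segment a b \<union> closed_segment b c \<union> closed_segment a c \<union> closed_segment d c \<union> closed_segment a d) F"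
      unfolding F_def
      by (intro continuous_intros continuous_on_subset[OF contg]) (use S1 S2 znot in auto)
    from two_tri[OF this] show ?thesis by simp
  qed
  have hF1: "F holomorphic_on convex hull {a,b,c}" if "z \<notin> convex hull {a,b,c}"
    unfolding F_def using that H1 holo Q_def
    by (intro holomorphic_intros) (auto intro: holomorphic_on_subset)
  have hF2: "F holomorphic_on convex hull {a,c,d}" if "z \<notin> convex hull {a,c,d}"
    unfolding F_def using that H2 holo Q_def
    by (intro holomorphic_intros) (auto intro: holomorphic_on_subset)
  have Z1: "contour_integral (linepath a b +++ linepath b c +++ linepath c a) F = 0" if "z \<notin> convex hull {a,b,c}"
    using Cauchy_theorem_triangle[OF hF1[OF that]] contour_integral_unique by blast
  have Z2: "contour_integral (linepath a c +++ linepath c d +++ linepath d a) F = 0" if "z \<notin> convex hull {a,c,d}"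
    using Cauchy_theorem_triangle[OF hF2[OF that]] contour_integral_unique by blast
  show "z \<notin> {w. x0 \<le> Re w \<and> Re w \<le> x0 + \<delta> \<and> y0 \<le> Im w \<and> Im w \<le> y0 + \<delta>} \<Longrightarrow>
      contour_integral (linepath a b) (\<lambda>w. g w / (w - z)) + contour_integral (linepath b c) (\<lambda>w. g w / (w - z))
    - contour_integral (linepath d c) (\<lambda>w. g w / (w - z)) - contour_integral (linepath a d) (\<lambda>w. g w / (w - z)) = 0"
  proof -
    assume z: "z \<notin> {w. x0 \<le> Re w \<and> Re w \<le> x0 + \<delta> \<and> y0 \<le> Im w \<and> Im w \<le> y0 + \<delta>}"
    then have zQ: "z \<notin> Q" by (simp add: Q_def)
    have "z \<notin> closed_segment a b \<union> closed_segment b c \<union> closed_segment a c \<union> closed_segment d c \<union> closed_segment a d"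
      using S1 S2 zQ by blast
    moreover have "z \<notin> convex hull {a,b,c}" "z \<notin> convex hull {a,c,d}" using zQ H1 H2 by auto
    ultimately show ?thesis using key Z1 Z2 by (simp add: F_def)
  qed
  show "x0 < Re z \<Longrightarrow> Re z < x0 + \<delta> \<Longrightarrow> y0 < Im z \<Longrightarrow> Im z < y0 + \<delta> \<Longrightarrow> Re z - x0 \<noteq> Im z - y0 \<Longrightarrow>
      contour_integral (linepath a b) (\<lambda>w. g w / (w - z)) + contour_integral (linepath b c) (\<lambda>w. g w / (w - z))
    - contour_integral (linepath d c) (\<lambda>w. g w / (w - z)) - contour_integral (linepath a d) (\<lambda>w. g w / (w - z)) = 2 * pi * \<i> * g z"
  proof -
    assume z: "x0 < Re z" "Re z < x0 + \<delta>" "y0 < Im z" "Im z < y0 + \<delta>" "Re z - x0 \<noteq> Im z - y0"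
    have znot: "z \<notin> closed_segment a b \<union> closed_segment b c \<union> closed_segment a c \<union> closed_segment d c \<union> closed_segment a d"
      using G(5-9) z by force
    show ?thesis
    proof (cases "Im z - y0 < Re z - x0")
      case True
      have zi: "z \<in> interior (convex hull {a,b,c})" using G(3) z True by auto
      have zn: "z \<notin> convex hull {a,c,d}" using G(2) True by auto
      have pim: "path_image (linepath a b +++ linepath b c +++ linepath c a) \<subseteq> convex hull {a,b,c} - {z}"
        using seg_in_hull[where a=a and b=b and c=c] znot by (auto simp: path_image_join closed_segment_commute)
      have "((\<lambda>w. g w / (w - z)) has_contour_integral (2 * pi * \<i> * winding_number (linepath a b +++ linepath b c +++ linepath c a) z * g z)) (linepath a b +++ linepath b c +++ linepath c a)"
        by (rule Cauchy_integral_formula_convex_simple[OF convex_convex_hull holomorphic_on_subset[OF holo] zi])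
           (use H1 pim in \<open>auto simp: Q_def\<close>)
      moreover have "winding_number (linepath a b +++ linepath b c +++ linepath c a) z = 1"
        using winding_number_triangle[OF zi] z \<delta> by (simp add: ad bd)
      ultimately have "contour_integral (linepath a b +++ linepath b c +++ linepath c a) F = 2 * pi * \<i> * g z"
        using contour_integral_unique F_def by fastforce
      with key[OF znot] Z2[OF zn] show ?thesis by (simp add: F_def)
    next
      case False
      then have lt: "Re z - x0 < Im z - y0" using z(5) by linarith
      have zi: "z \<in> interior (convex hull {a,c,d})" using G(4) z lt by auto
      have zn: "z \<notin> convex hull {a,b,c}" using G(1) lt by auto
      have pim: "path_image (linepath a c +++ linepath c d +++ linepath d a) \<subseteq> convex hull {a,c,d} - {z}"
        using seg_in_hull[where a=a and b=c and c=d] znot by (auto simp: path_image_join closed_segment_commute)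
      have "((\<lambda>w. g w / (w - z)) has_contour_integral (2 * pi * \<i> * winding_number (linepath a c +++ linepath c d +++ linepath d a) z * g z)) (linepath a c +++ linepath c d +++ linepath d a)"
        by (rule Cauchy_integral_formula_convex_simple[OF convex_convex_hull holomorphic_on_subset[OF holo] zi])
           (use H2 pim in \<open>auto simp: Q_def\<close>)
      moreover have "winding_number (linepath a c +++ linepath c d +++ linepath d a) z = 1"
      proof -
        have m: "\<delta> * (y0 + Re z) < \<delta> * (x0 + Im z)" using lt \<delta> by (intro mult_strict_left_mono) auto
        then show ?thesis using winding_number_triangle[OF zi] by (simp add: ad cd algebra_simps)
      qed
      ultimately have "contour_integral (linepath a c +++ linepath c d +++ linepath d a) F = 2 * pi * \<i> * g z"
        using contour_integral_unique F_def by fastforce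
      with key[OF znot] Z1[OF zn] show ?thesis by (simp add: F_def)
    qed
  qed
qed


definition gp :: "real \<Rightarrow> int \<times> int \<Rightarrow> complex" where
  "gp \<delta> q = Complex (of_int (fst q) * \<delta>) (of_int (snd q) * \<delta>)"

definition gsq :: "real \<Rightarrow> int \<times> int \<Rightarrow> complex set" where
  "gsq \<delta> q = {w. of_int (fst q) * \<delta> \<le> Re w \<and> Re w \<le> of_int (fst q) * \<delta> + \<delta> \<and>
                  of_int (snd q) * \<delta> \<le> Im w \<and> Im w \<le> of_int (snd q) * \<delta> + \<delta>}"

definition rt :: "int \<times> int \<Rightarrow> int \<times> int" where "rt q = (fst q + 1, snd q)"
definition up :: "int \<times> int \<Rightarrow> int \<times> int" where "up q = (fst q, snd q + 1)"

definition CI :: "(complex \<Rightarrow> complex) \<Rightarrow> complex \<Rightarrow> complex \<Rightarrow> complex \<Rightarrow> complex" where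
  "CI g a b z = contour_integral (linepath a b) (\<lambda>w. g w / (w - z))"

definition Esq :: "real \<Rightarrow> (complex \<Rightarrow> complex) \<Rightarrow> int \<times> int \<Rightarrow> complex \<Rightarrow> complex" where
  "Esq \<delta> g q z = CI g (gp \<delta> q) (gp \<delta> (rt q)) z + CI g (gp \<delta> (rt q)) (gp \<delta> (up (rt q))) z
                 - CI g (gp \<delta> (up q)) (gp \<delta> (up (rt q))) z - CI g (gp \<delta> q) (gp \<delta> (up q)) z"

lemma gp_rt: "gp \<delta> (rt q) = Complex (of_int (fst q) * \<delta> + \<delta>) (of_int (snd q) * \<delta>)"
  by (simp add: gp_def rt_def distrib_right)
lemma gp_up: "gp \<delta> (up q) = Complex (of_int (fst q) * \<delta>) (of_int (snd q) * \<delta> + \<delta>)"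
  by (simp add: gp_def up_def distrib_right)
lemma gp_up_rt: "gp \<delta> (up (rt q)) = Complex (of_int (fst q) * \<delta> + \<delta>) (of_int (snd q) * \<delta> + \<delta>)"
  by (simp add: gp_def up_def rt_def distrib_right)

lemma Esq_zero:
  assumes "\<delta> > 0" "g holomorphic_on gsq \<delta> q" "z \<notin> gsq \<delta> q"
  shows "Esq \<delta> g q z = 0"
  using sq_cases(1)[OF assms(1) gp_def gp_rt gp_up_rt gp_up, where g=g and z=z] assms
  unfolding Esq_def CI_def gsq_def by simp

lemma Esq_form:
  assumes "\<delta> > 0" "g holomorphic_on gsq \<delta> q"
    "of_int (fst q) * \<delta> < Re z" "Re z < of_int (fst q) * \<delta> + \<delta>"
    "of_int (snd q) * \<delta> < Im z" "Im z < of_int (snd q) * \<delta> + \<delta>"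
    "Re z - of_int (fst q) * \<delta> \<noteq> Im z - of_int (snd q) * \<delta>"
  shows "Esq \<delta> g q z = 2 * pi * \<i> * g z"
  using sq_cases(2)[OF assms(1) gp_def gp_rt gp_up_rt gp_up, where g=g and z=z] assms
  unfolding Esq_def CI_def gsq_def by simp

definition Ch :: "(int \<times> int) set \<Rightarrow> int \<times> int \<Rightarrow> complex" where
  "Ch S q = of_bool (q \<in> S) - of_bool (q \<in> up ` S)"
definition Cv :: "(int \<times> int) set \<Rightarrow> int \<times> int \<Rightarrow> complex" where
  "Cv S q = of_bool (q \<in> rt ` S) - of_bool (q \<in> S)"

lemma sum_of_bool_sub:
  fixes h :: "'b \<Rightarrow> complex"
  assumes "finite T" "A \<subseteq> T"
  shows "(\<Sum>q\<in>T. of_bool (q \<in> A) * h q) = sum h A"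
proof -
  have "(\<Sum>q\<in>T. of_bool (q \<in> A) * h q) = (\<Sum>q\<in>T. if q \<in> A then h q else 0)"
    by (intro sum.cong) auto
  also have "\<dots> = sum h (T \<inter> A)" using assms(1) by (simp add: sum.inter_restrict)
  also have "T \<inter> A = A" using assms(2) by blast
  finally show ?thesis .
qed

lemma inj_rt: "inj rt" by (auto simp: inj_def rt_def prod_eq_iff)
lemma inj_up: "inj up" by (auto simp: inj_def up_def prod_eq_iff)

lemma Esq_sum:
  assumes "finite S"
  shows "(\<Sum>q\<in>S. Esq \<delta> g q z) = (\<Sum>q\<in>S \<union> up ` S \<union> rt ` S.
            Ch S q * CI g (gp \<delta> q) (gp \<delta> (rt q)) z + Cv S q * CI g (gp \<delta> q) (gp \<delta> (up q)) z)"
proof -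
  define T where "T = S \<union> up ` S \<union> rt ` S"
  define H where "H = (\<lambda>q. CI g (gp \<delta> q) (gp \<delta> (rt q)) z)"
  define V where "V = (\<lambda>q. CI g (gp \<delta> q) (gp \<delta> (up q)) z)"
  have fT: "finite T" using assms by (simp add: T_def)
  have upr: "up (rt q) = rt (up q)" for q by (simp add: up_def rt_def)
  have "(\<Sum>q\<in>S. Esq \<delta> g q z) = sum H S + sum (V \<circ> rt) S - sum (H \<circ> up) S - sum V S"
    by (simp add: Esq_def sum.distrib sum_subtractf H_def V_def upr)
  also have "sum (V \<circ> rt) S = sum V (rt ` S)" by (simp add: sum.reindex inj_on_subset[OF inj_rt])
  also have "sum (H \<circ> up) S = sum H (up ` S)" by (simp add: sum.reindex inj_on_subset[OF inj_up])
  also have "sum H S = (\<Sum>q\<in>T. of_bool (q \<in> S) * H q)" by (rule sum_of_bool_sub[symmetric, OF fT]) (auto simp: T_def)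
  also have "sum H (up ` S) = (\<Sum>q\<in>T. of_bool (q \<in> up ` S) * H q)" by (rule sum_of_bool_sub[symmetric, OF fT]) (auto simp: T_def)
  also have "sum V (rt ` S) = (\<Sum>q\<in>T. of_bool (q \<in> rt ` S) * V q)" by (rule sum_of_bool_sub[symmetric, OF fT]) (auto simp: T_def)
  also have "sum V S = (\<Sum>q\<in>T. of_bool (q \<in> S) * V q)" by (rule sum_of_bool_sub[symmetric, OF fT]) (auto simp: T_def)
  finally have e: "(\<Sum>q\<in>S. Esq \<delta> g q z) = (\<Sum>q\<in>T. of_bool (q \<in> S) * H q) + (\<Sum>q\<in>T. of_bool (q \<in> rt ` S) * V q)
     - (\<Sum>q\<in>T. of_bool (q \<in> up ` S) * H q) - (\<Sum>q\<in>T. of_bool (q \<in> S) * V q)" .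
  have r: "(\<Sum>q\<in>T. Ch S q * H q + Cv S q * V q) = (\<Sum>q\<in>T. of_bool (q \<in> S) * H q) + (\<Sum>q\<in>T. of_bool (q \<in> rt ` S) * V q)
     - (\<Sum>q\<in>T. of_bool (q \<in> up ` S) * H q) - (\<Sum>q\<in>T. of_bool (q \<in> S) * V q)"
    by (simp add: Ch_def Cv_def left_diff_distrib sum.distrib sum_subtractf)
  show ?thesis using e r by (simp add: T_def H_def V_def)
qed

lemma gsq_convex: "convex (gsq \<delta> q)"
proof -
  have "gsq \<delta> q = {w. (-1) * Re w + 0 * Im w \<le> - (of_int (fst q) * \<delta>)} \<inter> {w. 1 * Re w + 0 * Im w \<le> of_int (fst q) * \<delta> + \<delta>}
     \<inter> {w. 0 * Re w + (-1) * Im w \<le> - (of_int (snd q) * \<delta>)} \<inter> {w. 0 * Re w + 1 * Im w \<le> of_int (snd q) * \<delta> + \<delta>}"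
    by (auto simp: gsq_def)
  then show ?thesis by (simp only:) (intro convex_Int convex_lin_le)
qed

lemma seg_h:
  assumes "\<delta> > 0"
  shows "closed_segment (gp \<delta> q) (gp \<delta> (rt q)) \<subseteq> gsq \<delta> q \<inter> gsq \<delta> (fst q, snd q - 1)"
proof -
  have "closed_segment (gp \<delta> q) (gp \<delta> (rt q)) \<subseteq> gsq \<delta> q"
    by (rule closed_segment_subset[OF _ _ gsq_convex]) (use assms in \<open>auto simp: gsq_def gp_def rt_def distrib_right\<close>)
  moreover have "closed_segment (gp \<delta> q) (gp \<delta> (rt q)) \<subseteq> gsq \<delta> (fst q, snd q - 1)"
    by (rule closed_segment_subset[OF _ _ gsq_convex]) (use assms in \<open>auto simp: gsq_def gp_def rt_def algebra_simps\<close>)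
  ultimately show ?thesis by blast
qed

lemma seg_v:
  assumes "\<delta> > 0"
  shows "closed_segment (gp \<delta> q) (gp \<delta> (up q)) \<subseteq> gsq \<delta> q \<inter> gsq \<delta> (fst q - 1, snd q)"
proof -
  have "closed_segment (gp \<delta> q) (gp \<delta> (up q)) \<subseteq> gsq \<delta> q"
    by (rule closed_segment_subset[OF _ _ gsq_convex]) (use assms in \<open>auto simp: gsq_def gp_def up_def distrib_right\<close>)
  moreover have "closed_segment (gp \<delta> q) (gp \<delta> (up q)) \<subseteq> gsq \<delta> (fst q - 1, snd q)"
    by (rule closed_segment_subset[OF _ _ gsq_convex]) (use assms in \<open>auto simp: gsq_def gp_def up_def algebra_simps\<close>)
  ultimately show ?thesis by blast
qed

lemma mem_up_image: "q \<in> up ` S \<longleftrightarrow> (fst q, snd q - 1) \<in> S"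
  by (auto simp: up_def image_iff prod_eq_iff intro: bexI[of _ "(fst q, snd q - 1)"])

lemma mem_rt_image: "q \<in> rt ` S \<longleftrightarrow> (fst q - 1, snd q) \<in> S"
  by (auto simp: rt_def image_iff prod_eq_iff intro: bexI[of _ "(fst q - 1, snd q)"])

lemma CI_isCont:
  assumes g: "continuous_on (closed_segment a b) g" and z0: "z0 \<notin> closed_segment a b"
  shows "isCont (CI g a b) z0"
proof -
  have int: "((\<lambda>u. g u / (u - w) ^ 1) has_contour_integral CI g a b w) (linepath a b)"
    if "w \<in> UNIV - path_image (linepath a b)" for w
  proof -
    have "continuous_on (closed_segment a b) (\<lambda>u. g u / (u - w))"
      using that by (intro continuous_intros g) auto
    then have "(\<lambda>u. g u / (u - w)) contour_integrable_on linepath a b"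
      by (rule contour_integrable_continuous_linepath)
    then show ?thesis unfolding CI_def by (simp add: has_contour_integral_integral)
  qed
  have "(CI g a b has_field_derivative (of_nat 1 * contour_integral (linepath a b) (\<lambda>u. g u / (u - z0) ^ Suc 1))) (at z0)"
    by (rule Cauchy_next_derivative(2)[where B = "norm (b - a)" and S = UNIV])
       (use g z0 int in auto)
  then show ?thesis by (rule DERIV_isCont)
qed

lemma int_cell_unique:
  fixes x \<delta> :: real
  assumes "\<delta> > 0" "of_int i * \<delta> < x" "x < of_int i * \<delta> + \<delta>" "of_int i' * \<delta> \<le> x" "x \<le> of_int i' * \<delta> + \<delta>"
  shows "i' = i"
proof -
  have "of_int i' * \<delta> < (of_int i + 1) * \<delta>" using assms by (simp add: distrib_right)
  then have "of_int i' < (of_int i + 1 :: real)" using assms(1) by simp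
  then have 1: "i' < i + 1" by linarith
  have "of_int i * \<delta> < (of_int i' + 1) * \<delta>" using assms by (simp add: distrib_right)
  then have "of_int i < (of_int i' + 1 :: real)" using assms(1) by simp
  then have 2: "i < i' + 1" by linarith
  show ?thesis using 1 2 by linarith
qed

lemma mix_bounds:
  fixes l s c \<delta> :: real
  assumes "0 < l" "l < 1" "0 \<le> s" "s < \<delta>" "0 < c" "c < \<delta>"
  shows "0 < s + (c - s) * l" "s + (c - s) * l < \<delta>"
proof -
  have e: "s + (c - s) * l = (1 - l) * s + l * c" by (simp add: algebra_simps)
  have "0 \<le> (1 - l) * s" using assms by simp
  moreover have "0 < l * c" using assms by simp
  ultimately show "0 < s + (c - s) * l" using e by linarith
  have "(1 - l) * s \<le> (1 - l) * \<delta>" using assms by (intro mult_left_mono) auto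
  moreover have "l * c < l * \<delta>" using assms by simp
  ultimately show "s + (c - s) * l < \<delta>" using e by (simp add: algebra_simps)
qed

lemma mix_diff:
  fixes l s t cs ct :: real
  assumes "0 < l" "l < 1" "t \<le> s" "ct < cs"
  shows "t + (ct - t) * l < s + (cs - s) * l"
proof -
  have e: "(s + (cs - s) * l) - (t + (ct - t) * l) = (1 - l) * (s - t) + l * (cs - ct)" by (simp add: algebra_simps)
  have "0 \<le> (1 - l) * (s - t)" using assms by simp
  moreover have "0 < l * (cs - ct)" using assms by simp
  ultimately show ?thesis using e by linarith
qed

lemma F_inside:
  assumes \<delta>: "\<delta> > 0" and hol: "\<And>q. q \<in> S \<Longrightarrow> g holomorphic_on gsq \<delta> q" and q0: "q0 \<in> S"
    and z: "of_int (fst q0) * \<delta> < Re z" "Re z < of_int (fst q0) * \<delta> + \<delta>"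
    "of_int (snd q0) * \<delta> < Im z" "Im z < of_int (snd q0) * \<delta> + \<delta>"
    "Re z - of_int (fst q0) * \<delta> \<noteq> Im z - of_int (snd q0) * \<delta>"
    and fin: "finite S"
  shows "(\<Sum>q\<in>S. Esq \<delta> g q z) = 2 * pi * \<i> * g z"
proof -
  have zero: "\<forall>q\<in>S - {q0}. Esq \<delta> g q z = 0"
    proof
      fix q assume q: "q \<in> S - {q0}"
      have "z \<notin> gsq \<delta> q"
      proof
        assume zq: "z \<in> gsq \<delta> q"
        have "fst q = fst q0"
          by (rule int_cell_unique[OF \<delta> z(1,2)]) (use zq in \<open>auto simp: gsq_def\<close>)
        moreover have "snd q = snd q0"
          by (rule int_cell_unique[OF \<delta> z(3,4)]) (use zq in \<open>auto simp: gsq_def\<close>)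
        ultimately show False using q by (auto simp: prod_eq_iff)
      qed
      then show "Esq \<delta> g q z = 0" using Esq_zero[OF \<delta> hol] q by blast
    qed
  have "(\<Sum>q\<in>S. Esq \<delta> g q z) = Esq \<delta> g q0 z + (\<Sum>q\<in>S - {q0}. Esq \<delta> g q z)"
    using sum.remove[OF fin q0] by blast
  also have "(\<Sum>q\<in>S - {q0}. Esq \<delta> g q z) = 0" using zero by simp
  finally have "(\<Sum>q\<in>S. Esq \<delta> g q z) = Esq \<delta> g q0 z" by simp
  also have "\<dots> = 2 * pi * \<i> * g z" by (rule Esq_form[OF \<delta> hol[OF q0] z])
  finally show ?thesis .
qed

lemma F_at_K:
  assumes \<delta>: "\<delta> > 0" and hol: "\<And>q. q \<in> S \<Longrightarrow> g holomorphic_on gsq \<delta> q" and fin: "finite S"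
    and Sin: "\<And>q. gsq \<delta> q \<inter> K \<noteq> {} \<Longrightarrow> q \<in> S"
    and z0: "z0 \<in> K" and contF: "isCont (\<lambda>z. \<Sum>q\<in>S. Esq \<delta> g q z) z0" and contg: "isCont g z0"
  shows "(\<Sum>q\<in>S. Esq \<delta> g q z0) = 2 * pi * \<i> * g z0"
proof -
  define i where "i = \<lfloor>Re z0 / \<delta>\<rfloor>"
  define j where "j = \<lfloor>Im z0 / \<delta>\<rfloor>"
  define q0 where "q0 = (i, j)"
  have "of_int i \<le> Re z0 / \<delta>" "Re z0 / \<delta> < of_int i + 1" by (simp_all add: i_def)
  then have bi: "of_int i * \<delta> \<le> Re z0" "Re z0 < of_int i * \<delta> + \<delta>"
    using \<delta> by (simp_all add: pos_le_divide_eq pos_divide_less_eq distrib_right)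
  have "of_int j \<le> Im z0 / \<delta>" "Im z0 / \<delta> < of_int j + 1" by (simp_all add: j_def)
  then have bj: "of_int j * \<delta> \<le> Im z0" "Im z0 < of_int j * \<delta> + \<delta>"
    using \<delta> by (simp_all add: pos_le_divide_eq pos_divide_less_eq distrib_right)
  have "z0 \<in> gsq \<delta> q0" using bi bj by (simp add: gsq_def q0_def)
  then have q0S: "q0 \<in> S" using Sin z0 by blast
  define s0 where "s0 = Re z0 - of_int i * \<delta>"
  define t0 where "t0 = Im z0 - of_int j * \<delta>"
  have st: "0 \<le> s0" "s0 < \<delta>" "0 \<le> t0" "t0 < \<delta>" using bi bj by (auto simp: s0_def t0_def)
  obtain cs ct where c: "0 < cs" "cs < \<delta>" "0 < ct" "ct < \<delta>"
    and cc: "(t0 \<le> s0 \<and> ct < cs) \<or> (s0 \<le> t0 \<and> cs < ct)"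
  proof (cases "t0 \<le> s0")
    case True
    show ?thesis by (rule that[of "2 * \<delta> / 3" "\<delta> / 3"]) (use \<delta> True in auto)
  next
    case False
    show ?thesis by (rule that[of "\<delta> / 3" "2 * \<delta> / 3"]) (use \<delta> False in auto)
  qed
  define lam where "lam = (\<lambda>m::nat. inverse (real (Suc m)) / 2)"
  define zs where "zs = (\<lambda>m. Complex (of_int i * \<delta> + (s0 + (cs - s0) * lam m)) (of_int j * \<delta> + (t0 + (ct - t0) * lam m)))"
  have lam: "0 < lam m" "lam m < 1" for m
    by (auto simp: lam_def field_simps)
  have eqm: "(\<Sum>q\<in>S. Esq \<delta> g q (zs m)) = 2 * pi * \<i> * g (zs m)" for m
  proof -
    note b1 = mix_bounds[OF lam[of m] st(1,2) c(1,2)]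
    note b2 = mix_bounds[OF lam[of m] st(3,4) c(3,4)]
    have ne: "s0 + (cs - s0) * lam m \<noteq> t0 + (ct - t0) * lam m"
      using cc mix_diff[OF lam[of m], of t0 s0 ct cs] mix_diff[OF lam[of m], of s0 t0 cs ct] by force
    show ?thesis
      by (rule F_inside[OF \<delta> hol q0S _ _ _ _ _ fin]) (use b1 b2 ne in \<open>auto simp: zs_def q0_def\<close>)
  qed
  have lam0: "lam \<longlonglongrightarrow> 0"
    unfolding lam_def using tendsto_divide[OF LIMSEQ_inverse_real_of_nat tendsto_const[of 2]] by simp
  have "zs \<longlonglongrightarrow> Complex (of_int i * \<delta> + (s0 + (cs - s0) * 0)) (of_int j * \<delta> + (t0 + (ct - t0) * 0))"
    unfolding zs_def by (intro tendsto_intros lam0)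
  then have zsl: "zs \<longlonglongrightarrow> z0" by (simp add: s0_def t0_def complex_eq_iff)
  have "(\<lambda>m. \<Sum>q\<in>S. Esq \<delta> g q (zs m)) \<longlonglongrightarrow> (\<Sum>q\<in>S. Esq \<delta> g q z0)"
    by (rule isCont_tendsto_compose[OF contF zsl])
  moreover have "(\<lambda>m. \<Sum>q\<in>S. Esq \<delta> g q (zs m)) \<longlonglongrightarrow> 2 * pi * \<i> * g z0"
    unfolding eqm by (intro tendsto_intros isCont_tendsto_compose[OF contg zsl])
  ultimately show ?thesis by (rule LIMSEQ_unique)
qed

definition EA :: "real \<Rightarrow> (int \<times> int) \<times> bool \<Rightarrow> complex" where "EA \<delta> x = gp \<delta> (fst x)"
definition EB :: "real \<Rightarrow> (int \<times> int) \<times> bool \<Rightarrow> complex" where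
  "EB \<delta> x = (if snd x then gp \<delta> (rt (fst x)) else gp \<delta> (up (fst x)))"
definition Cf :: "(int \<times> int) set \<Rightarrow> (int \<times> int) \<times> bool \<Rightarrow> complex" where
  "Cf S x = (if snd x then Ch S (fst x) else Cv S (fst x))"
definition Xs :: "(int \<times> int) set \<Rightarrow> ((int \<times> int) \<times> bool) set" where
  "Xs S = {x \<in> (S \<union> up ` S \<union> rt ` S) \<times> UNIV. Cf S x \<noteq> 0}"

lemma finite_Xs: "finite S \<Longrightarrow> finite (Xs S)"
  unfolding Xs_def by (rule finite_subset[of _ "(S \<union> up ` S \<union> rt ` S) \<times> UNIV"]) auto

lemma F_edges:
  assumes fin: "finite S"
  shows "(\<Sum>q\<in>S. Esq \<delta> g q z) = (\<Sum>x\<in>Xs S. Cf S x * CI g (EA \<delta> x) (EB \<delta> x) z)"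
proof -
  define T where "T = S \<union> up ` S \<union> rt ` S"
  have fT: "finite T" using fin by (simp add: T_def)
  have "(\<Sum>q\<in>S. Esq \<delta> g q z) = (\<Sum>q\<in>T. \<Sum>b\<in>UNIV. Cf S (q, b) * CI g (EA \<delta> (q, b)) (EB \<delta> (q, b)) z)"
    unfolding Esq_sum[OF fin] T_def[symmetric] by (simp add: UNIV_bool Cf_def EA_def EB_def add.commute)
  also have "\<dots> = (\<Sum>x\<in>T \<times> UNIV. Cf S x * CI g (EA \<delta> x) (EB \<delta> x) z)"
    by (simp add: sum.cartesian_product)
  also have "\<dots> = (\<Sum>x\<in>Xs S. Cf S x * CI g (EA \<delta> x) (EB \<delta> x) z)"
    by (rule sum.mono_neutral_right) (use fT in \<open>auto simp: Xs_def T_def\<close>)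
  finally show ?thesis .
qed

lemma good_edge:
  assumes \<delta>: "\<delta> > 0" and Sdef: "\<And>q. q \<in> S \<longleftrightarrow> gsq \<delta> q \<inter> K \<noteq> {}"
    and sub: "\<And>q. q \<in> S \<Longrightarrow> gsq \<delta> q \<subseteq> U" and x: "x \<in> Xs S"
  shows "closed_segment (EA \<delta> x) (EB \<delta> x) \<inter> K = {}" "closed_segment (EA \<delta> x) (EB \<delta> x) \<subseteq> U"
proof -
  obtain q b where xq: "x = (q, b)" by (cases x)
  have "closed_segment (EA \<delta> x) (EB \<delta> x) \<inter> K = {} \<and> closed_segment (EA \<delta> x) (EB \<delta> x) \<subseteq> U"
  proof (cases b)
    case True
    have ne: "(q \<in> S) \<noteq> ((fst q, snd q - 1) \<in> S)" using x by (auto simp: Xs_def Cf_def Ch_def xq True mem_up_image)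
    have seg: "closed_segment (EA \<delta> x) (EB \<delta> x) \<subseteq> gsq \<delta> q \<inter> gsq \<delta> (fst q, snd q - 1)"
      using seg_h[OF \<delta>, of q] by (simp add: EA_def EB_def xq True)
    have "closed_segment (EA \<delta> x) (EB \<delta> x) \<inter> K = {}"
    proof (rule ccontr)
      assume "closed_segment (EA \<delta> x) (EB \<delta> x) \<inter> K \<noteq> {}"
      then have "gsq \<delta> q \<inter> K \<noteq> {}" "gsq \<delta> (fst q, snd q - 1) \<inter> K \<noteq> {}" using seg by blast+
      then show False using ne Sdef by blast
    qed
    moreover have "closed_segment (EA \<delta> x) (EB \<delta> x) \<subseteq> U" using ne seg sub by blast
    ultimately show ?thesis by blast
  next
    case False
    have ne: "((fst q - 1, snd q) \<in> S) \<noteq> (q \<in> S)" using x by (auto simp: Xs_def Cf_def Cv_def xq False mem_rt_image)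
    have seg: "closed_segment (EA \<delta> x) (EB \<delta> x) \<subseteq> gsq \<delta> q \<inter> gsq \<delta> (fst q - 1, snd q)"
      using seg_v[OF \<delta>, of q] by (simp add: EA_def EB_def xq False)
    have "closed_segment (EA \<delta> x) (EB \<delta> x) \<inter> K = {}"
    proof (rule ccontr)
      assume "closed_segment (EA \<delta> x) (EB \<delta> x) \<inter> K \<noteq> {}"
      then have "gsq \<delta> q \<inter> K \<noteq> {}" "gsq \<delta> (fst q - 1, snd q) \<inter> K \<noteq> {}" using seg by blast+
      then show False using ne Sdef by blast
    qed
    moreover have "closed_segment (EA \<delta> x) (EB \<delta> x) \<subseteq> U" using ne seg sub by blast
    ultimately show ?thesis by blast
  qed
  then show "closed_segment (EA \<delta> x) (EB \<delta> x) \<inter> K = {}" "closed_segment (EA \<delta> x) (EB \<delta> x) \<subseteq> U" by blast+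
qed

lemma repr:
  assumes \<delta>: "\<delta> > 0" and Sdef: "\<And>q. q \<in> S \<longleftrightarrow> gsq \<delta> q \<inter> K \<noteq> {}" and fin: "finite S"
    and sub: "\<And>q. q \<in> S \<Longrightarrow> gsq \<delta> q \<subseteq> U" and U: "open U" and hol: "g holomorphic_on U"
    and z0: "z0 \<in> K"
  shows "(\<Sum>x\<in>Xs S. Cf S x * CI g (EA \<delta> x) (EB \<delta> x) z0) = 2 * pi * \<i> * g z0"
proof -
  have ge1: "closed_segment (EA \<delta> x) (EB \<delta> x) \<inter> K = {}" if "x \<in> Xs S" for x
    by (rule good_edge(1)[of \<delta> S K U x, OF \<delta> Sdef sub that])
  have ge2: "closed_segment (EA \<delta> x) (EB \<delta> x) \<subseteq> U" if "x \<in> Xs S" for x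
    by (rule good_edge(2)[of \<delta> S K U x, OF \<delta> Sdef sub that])
  have contU: "continuous_on U g" using hol holomorphic_on_imp_continuous_on by blast
  have "isCont (\<lambda>z. \<Sum>x\<in>Xs S. Cf S x * CI g (EA \<delta> x) (EB \<delta> x) z) z0"
  proof (intro continuous_intros)
    fix x assume x: "x \<in> Xs S"
    show "isCont (CI g (EA \<delta> x) (EB \<delta> x)) z0"
      by (rule CI_isCont[OF continuous_on_subset[OF contU ge2[OF x]]]) (use ge1[OF x] z0 in blast)
  qed
  then have contF: "isCont (\<lambda>z. \<Sum>q\<in>S. Esq \<delta> g q z) z0"
    unfolding F_edges[OF fin] .
  have "z0 \<in> U"
  proof -
    obtain q where "z0 \<in> gsq \<delta> q" "q \<in> S"
    proof -
      define i where "i = \<lfloor>Re z0 / \<delta>\<rfloor>"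
      define j where "j = \<lfloor>Im z0 / \<delta>\<rfloor>"
      have "of_int i \<le> Re z0 / \<delta>" "Re z0 / \<delta> < of_int i + 1" by (simp_all add: i_def)
      then have bi: "of_int i * \<delta> \<le> Re z0" "Re z0 < of_int i * \<delta> + \<delta>"
        using \<delta> by (simp_all add: pos_le_divide_eq pos_divide_less_eq distrib_right)
      have "of_int j \<le> Im z0 / \<delta>" "Im z0 / \<delta> < of_int j + 1" by (simp_all add: j_def)
      then have bj: "of_int j * \<delta> \<le> Im z0" "Im z0 < of_int j * \<delta> + \<delta>"
        using \<delta> by (simp_all add: pos_le_divide_eq pos_divide_less_eq distrib_right)
      have "z0 \<in> gsq \<delta> (i, j)" using bi bj by (simp add: gsq_def)
      then show ?thesis using that Sdef z0 by blast
    qed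
    then show ?thesis using sub by blast
  qed
  then have contg: "isCont g z0" using contU U continuous_on_eq_continuous_at by blast
  have "(\<Sum>q\<in>S. Esq \<delta> g q z0) = 2 * pi * \<i> * g z0"
    by (rule F_at_K[OF \<delta> _ fin _ z0 contF contg])
       (use Sdef sub hol holomorphic_on_subset in blast)+
  then show ?thesis by (simp add: F_edges[OF fin])
qed



lemma uniform_limit_sum_fin:
  fixes F :: "'i \<Rightarrow> nat \<Rightarrow> 'a \<Rightarrow> complex"
  assumes "finite X" "\<And>x. x \<in> X \<Longrightarrow> uniform_limit L (F x) (G x) sequentially"
  shows "uniform_limit L (\<lambda>n z. \<Sum>x\<in>X. F x n z) (\<lambda>z. \<Sum>x\<in>X. G x z) sequentially"
  using assms
proof (induction X rule: finite_induct)
  case empty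
  then show ?case by (simp add: uniform_limit_const)
next
  case (insert y X)
  have "uniform_limit L (\<lambda>n z. F y n z + (\<Sum>x\<in>X. F x n z)) (\<lambda>z. G y z + (\<Sum>x\<in>X. G x z)) sequentially"
    by (rule uniform_limit_add) (use insert in auto)
  then show ?case using insert.hyps by simp
qed

theorem theorem3p2:
  fixes M :: "'a measure" and U K :: "complex set" and f :: "'a \<Rightarrow> complex \<Rightarrow> complex"
  assumes "open U" and "random_holomorphic M U f" and "compact K" and "K \<subseteq> U"
  shows "\<exists>R :: nat \<Rightarrow> 'a \<Rightarrow> complex \<Rightarrow> complex.
           (\<forall>n. random_rational_no_poles_on M K (R n)) \<and>
           (\<forall>\<omega>\<in>space M. uniform_limit K (\<lambda>n. R n \<omega>) (f \<omega>) sequentially)"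
proof -
  note U = assms(1) and K = assms(3) and KU = assms(4)
  have hol: "\<And>\<omega>. \<omega> \<in> space M \<Longrightarrow> f \<omega> holomorphic_on U"
    and meas: "\<And>z. z \<in> U \<Longrightarrow> (\<lambda>\<omega>. f \<omega> z) \<in> borel_measurable M"
    using assms(2) by (auto simp: random_holomorphic_def)
  obtain \<epsilon> where \<epsilon>: "\<epsilon> > 0" and \<epsilon>U: "(\<Union>x\<in>K. cball x \<epsilon>) \<subseteq> U"
    using compact_subset_open_imp_cball_epsilon_subset[OF K U KU] by blast
  define \<delta> where "\<delta> = \<epsilon> / 2"
  have \<delta>: "\<delta> > 0" using \<epsilon> by (simp add: \<delta>_def)
  define S where "S = {q. gsq \<delta> q \<inter> K \<noteq> {}}"
  have Sdef: "\<And>q. q \<in> S \<longleftrightarrow> gsq \<delta> q \<inter> K \<noteq> {}" by (simp add: S_def)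
  have sub: "gsq \<delta> q \<subseteq> U" if q: "q \<in> S" for q
  proof
    fix w assume w: "w \<in> gsq \<delta> q"
    obtain x where x: "x \<in> gsq \<delta> q" "x \<in> K" using q Sdef by blast
    have "dist x w \<le> \<bar>Re (x - w)\<bar> + \<bar>Im (x - w)\<bar>" unfolding dist_norm by (rule cmod_le)
    also have "\<dots> \<le> \<delta> + \<delta>"
    proof (rule add_mono)
      have a: "of_int (fst q) * \<delta> \<le> Re x" "Re x \<le> of_int (fst q) * \<delta> + \<delta>"
           "of_int (fst q) * \<delta> \<le> Re w" "Re w \<le> of_int (fst q) * \<delta> + \<delta>"
           "of_int (snd q) * \<delta> \<le> Im x" "Im x \<le> of_int (snd q) * \<delta> + \<delta>"
           "of_int (snd q) * \<delta> \<le> Im w" "Im w \<le> of_int (snd q) * \<delta> + \<delta>"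
        using x(1) w unfolding gsq_def mem_Collect_eq by blast+
      show "\<bar>Re (x - w)\<bar> \<le> \<delta>" using a(1-4) unfolding minus_complex.sel abs_le_iff by linarith
      show "\<bar>Im (x - w)\<bar> \<le> \<delta>" using a(5-8) unfolding minus_complex.sel abs_le_iff by linarith
    qed
    also have "\<dots> = \<epsilon>" by (simp add: \<delta>_def)
    finally have "w \<in> cball x \<epsilon>" by simp
    then show "w \<in> U" using \<epsilon>U x(2) by blast
  qed
  have fin: "finite S"
  proof -
    obtain B where B: "\<And>z. z \<in> K \<Longrightarrow> norm z \<le> B"
      using compact_imp_bounded[OF K] bounded_iff by blast
    define lo where "lo = \<lceil>- B / \<delta> - 1\<rceil>"
    define hi where "hi = \<lfloor>B / \<delta>\<rfloor>"
    have bnd: "lo \<le> i \<and> i \<le> hi" if "of_int i * \<delta> \<le> x" "x \<le> of_int i * \<delta> + \<delta>" "\<bar>x\<bar> \<le> B" for i x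
    proof -
      have "of_int i * \<delta> \<le> B" using that by linarith
      then have "of_int i \<le> B / \<delta>" using \<delta> by (simp add: pos_le_divide_eq)
      then have 1: "i \<le> hi" by (simp add: hi_def le_floor_iff)
      have "- B \<le> (of_int i + 1) * \<delta>" using that by (simp add: distrib_right)
      then have "- B / \<delta> \<le> of_int i + 1" using \<delta> by (subst pos_divide_le_eq[OF \<delta>]) simp
      then have "- B / \<delta> - 1 \<le> of_int i" by linarith
      then have 2: "lo \<le> i" by (simp only: lo_def ceiling_le_iff)
      show ?thesis using 1 2 by simp
    qed
    have "S \<subseteq> {lo..hi} \<times> {lo..hi}"
    proof
      fix q assume "q \<in> S"
      then obtain w where w: "w \<in> gsq \<delta> q" "w \<in> K" using Sdef by blast
      have "\<bar>Re w\<bar> \<le> B" "\<bar>Im w\<bar> \<le> B" using B[OF w(2)] abs_Re_le_cmod abs_Im_le_cmod order_trans by blast+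
      then show "q \<in> {lo..hi} \<times> {lo..hi}"
      proof -
        have a: "of_int (fst q) * \<delta> \<le> Re w" "Re w \<le> of_int (fst q) * \<delta> + \<delta>"
           "of_int (snd q) * \<delta> \<le> Im w" "Im w \<le> of_int (snd q) * \<delta> + \<delta>"
          using w(1) unfolding gsq_def mem_Collect_eq by blast+
        have "lo \<le> fst q \<and> fst q \<le> hi" by (rule bnd[OF a(1,2)]) fact
        moreover have "lo \<le> snd q \<and> snd q \<le> hi" by (rule bnd[OF a(3,4)]) fact
        ultimately show ?thesis by (simp add: mem_Times_iff)
      qed
    qed
    then show ?thesis by (rule finite_subset) simp
  qed
  define X where "X = Xs S"
  have finX: "finite X" using finite_Xs[OF fin] by (simp add: X_def)
  have ge1: "closed_segment (EA \<delta> x) (EB \<delta> x) \<inter> K = {}" if "x \<in> X" for x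
    by (rule good_edge(1)[of \<delta> S K U x, OF \<delta> Sdef sub]) (use that X_def in auto)
  have ge2: "closed_segment (EA \<delta> x) (EB \<delta> x) \<subseteq> U" if "x \<in> X" for x
    by (rule good_edge(2)[of \<delta> S K U x, OF \<delta> Sdef sub]) (use that X_def in auto)
  define wn where "wn = (\<lambda>n::nat. \<lambda>(x, k::nat). linepath (EA \<delta> x) (EB \<delta> x) (real k / real n))"
  define cn where "cn = (\<lambda>n::nat. \<lambda>(x, k::nat). Cf S x / (2 * pi * \<i>) * ((EB \<delta> x - EA \<delta> x) / of_nat n))"
  define R where "R = (\<lambda>n \<omega> z. ratf (X \<times> {..<n}) (cn n) (wn n) (f \<omega>) z)"
  have node_seg: "wn n j \<in> closed_segment (EA \<delta> (fst j)) (EB \<delta> (fst j))" if "j \<in> X \<times> {..<n}" for n j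
  proof -
    obtain x k where j: "j = (x, k)" by (cases j)
    have "0 \<le> real k / real n" "real k / real n \<le> 1" using that by (auto simp: j divide_simps)
    then have "linepath (EA \<delta> x) (EB \<delta> x) (real k / real n) \<in> closed_segment (EA \<delta> x) (EB \<delta> x)"
      using linepath_in_path[of "real k / real n" "EA \<delta> x" "EB \<delta> x"] by simp
    then show ?thesis by (simp add: wn_def j)
  qed
  have part1: "random_rational_no_poles_on M K (R n)" for n
    unfolding random_rational_no_poles_on_def
  proof (intro conjI ballI allI)
    fix \<omega> assume "\<omega> \<in> space M"
    show "rational_no_poles_on K (R n \<omega>)" unfolding R_def
    proof (rule ratf_rational)
      show "finite (X \<times> {..<n})" using finX by simp
      show "wn n ` (X \<times> {..<n}) \<inter> K = {}"
      proof -
        have "wn n j \<notin> K" if j: "j \<in> X \<times> {..<n}" for j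
        proof -
          have "fst j \<in> X" using j by auto
          then show ?thesis using node_seg[OF j] ge1[of "fst j"] by blast
        qed
        then show ?thesis by blast
      qed
    qed
  next
    fix z
    show "(\<lambda>\<omega>. R n \<omega> z) \<in> borel_measurable M" unfolding R_def
    proof (rule ratf_measurable)
      fix j assume j: "j \<in> X \<times> {..<n}"
      show "(\<lambda>\<omega>. f \<omega> (wn n j)) \<in> borel_measurable M"
      proof (rule meas)
        have "fst j \<in> X" using j by auto
        then show "wn n j \<in> U" using node_seg[OF j] ge2[of "fst j"] by blast
      qed
    qed
  qed
  have part2: "uniform_limit K (\<lambda>n. R n \<omega>) (f \<omega>) sequentially" if \<omega>: "\<omega> \<in> space M" for \<omega>
  proof -
    define g where "g = f \<omega>"
    have holg: "g holomorphic_on U" using hol[OF \<omega>] by (simp add: g_def)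
    have contg: "continuous_on U g" using holg holomorphic_on_imp_continuous_on by blast
    define T where "T = (\<lambda>x n z. Cf S x / (2 * pi * \<i>) * ((EB \<delta> x - EA \<delta> x) / of_nat n *
        (\<Sum>k<n. g (linepath (EA \<delta> x) (EB \<delta> x) (real k / real n)) / (linepath (EA \<delta> x) (EB \<delta> x) (real k / real n) - z))))"
    have eqR: "R n \<omega> z = (\<Sum>x\<in>X. T x n z)" if z: "z \<in> K" for n z
    proof -
      have "wn n j \<noteq> z" if j: "j \<in> X \<times> {..<n}" for j
      proof -
        have "fst j \<in> X" using j by auto
        then show ?thesis using node_seg[OF j] ge1[of "fst j"] z by blast
      qed
      then have "z \<notin> wn n ` (X \<times> {..<n})" by blast
      then have "R n \<omega> z = (\<Sum>j\<in>X \<times> {..<n}. cn n j * g (wn n j) / (wn n j - z))"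
        by (simp add: R_def ratf_def g_def)
      also have "\<dots> = (\<Sum>x\<in>X. \<Sum>k<n. cn n (x, k) * g (wn n (x, k)) / (wn n (x, k) - z))"
        by (simp add: sum.cartesian_product)
      also have "\<dots> = (\<Sum>x\<in>X. T x n z)"
        unfolding T_def cn_def wn_def sum_distrib_left
        by (intro sum.cong refl) (simp add: mult.assoc)
      finally show ?thesis .
    qed
    have lim: "uniform_limit K (\<lambda>n z. \<Sum>x\<in>X. T x n z)
        (\<lambda>z. \<Sum>x\<in>X. Cf S x / (2 * pi * \<i>) * CI g (EA \<delta> x) (EB \<delta> x) z) sequentially"
    proof (rule uniform_limit_sum_fin[OF finX])
      fix x assume x: "x \<in> X"
      have "uniform_limit K
         (\<lambda>n z. (EB \<delta> x - EA \<delta> x) / of_nat n * (\<Sum>k<n. g (linepath (EA \<delta> x) (EB \<delta> x) (real k / n)) / (linepath (EA \<delta> x) (EB \<delta> x) (real k / n) - z)))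
         (\<lambda>z. contour_integral (linepath (EA \<delta> x) (EB \<delta> x)) (\<lambda>w. g w / (w - z))) sequentially"
        by (rule riemann_linepath[OF continuous_on_subset[OF contg ge2[OF x]] K])
           (use ge1[OF x] in blast)
      then show "uniform_limit K (T x) (\<lambda>z. Cf S x / (2 * pi * \<i>) * CI g (EA \<delta> x) (EB \<delta> x) z) sequentially"
        unfolding T_def CI_def by (intro uniform_limit_intros)
    qed
    have eqlim: "(\<Sum>x\<in>X. Cf S x / (2 * pi * \<i>) * CI g (EA \<delta> x) (EB \<delta> x) z) = g z" if z: "z \<in> K" for z
    proof -
      have "(\<Sum>x\<in>X. Cf S x / (2 * pi * \<i>) * CI g (EA \<delta> x) (EB \<delta> x) z)
          = (\<Sum>x\<in>X. Cf S x * CI g (EA \<delta> x) (EB \<delta> x) z) / (2 * pi * \<i>)"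
        by (simp add: sum_divide_distrib)
      also have "\<dots> = g z"
        using repr[OF \<delta> Sdef fin sub U holg z] by (simp add: X_def)
      finally show ?thesis .
    qed
    have c1: "uniform_limit K (\<lambda>n z. \<Sum>x\<in>X. T x n z)
        (\<lambda>z. \<Sum>x\<in>X. Cf S x / (2 * pi * \<i>) * CI g (EA \<delta> x) (EB \<delta> x) z) sequentially
      \<longleftrightarrow> uniform_limit K (\<lambda>n z. \<Sum>x\<in>X. T x n z) g sequentially"
      by (rule uniform_limit_cong') (rule refl, rule eqlim)
    have c2: "uniform_limit K (\<lambda>n. R n \<omega>) (f \<omega>) sequentially
      \<longleftrightarrow> uniform_limit K (\<lambda>n z. \<Sum>x\<in>X. T x n z) g sequentially"
      by (rule uniform_limit_cong') (rule eqR, assumption, simp add: g_def)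
    show ?thesis using c1 c2 lim by blast
  qed
  show ?thesis using part1 part2 by blast
qed

end
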